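(* Let $\Sigma$ be an alphabet and $L\ge n\ge 1$. Let $h_1:\Sigma\to\mathrm{GF}(2)[x]/(x^L+1)$ be a random function whose values $h_1(c)$, $c\in\Sigma$, are mutually independent and uniformly distributed, and let $h(a_1,\dots,a_n)=\sum_{i=1}^n h_1(a_i)x^{n-i}$ computed in $\mathrm{GF}(2)[x]/(x^L+1)$. Fix a set $S$ of $n-1$ bit positions consecutive modulo $L$, and let $\tilde h(a)$ denote the $(L-n+1)$-bit value obtained from $h(a)$ by deleting the bits at positions in $S$. Then $\tilde h$ is pairwise independent: for all distinct $a,a'\in\Sigma^n$ and all $(L-n+1)$-bit values $y,y'$, $P(\tilde h(a)=y\wedge\tilde h(a')=y')=2^{-2(L-n+1)}$.
   Context: This is the Cyclic hash family. Elements of $\mathrm{GF}(2)[x]/(x^L+1)$ are identified with polynomials $\sum_{i=0}^{L-1}c_ix^i$ over $\mathrm{GF}(2)$ (equivalently $L$-bit integers with bit $i$ equal to $c_i$). A set of $m$ positions is consecutive modulo $L$ if it equals $\{k\bmod L,\dots,(k+m-1)\bmod L\}$ for some integer $k$. *)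

theory Defs
  imports Main "HOL-Library.Z2" "HOL-Computational_Algebra.Polynomial"
    "HOL-Computational_Algebra.Polynomial_Factorial"
begin

text \<open>Elements of GF(2)[x]/(x^L+1) are represented by their canonical representatives:
  polynomials over GF(2) (the type bit of HOL-Library.Z2) of degree less than L.
  Bit i of an element p is coeff p i.\<close>

definition cyc_ring :: "nat \<Rightarrow> bit poly set" where
  "cyc_ring L = {p. degree p < L}"

definition cyc_red :: "nat \<Rightarrow> bit poly \<Rightarrow> bit poly" where
  "cyc_red L p = p mod (monom 1 L + 1)"

text \<open>The Cyclic hash: h(a_1..a_n) = sum_{i=1}^n h1(a_i) x^(n-i) in GF(2)[x]/(x^L+1).
  The string a is a list of length n, a!(i-1) = a_i.\<close>
definition cyclic_hash :: "nat \<Rightarrow> ('a \<Rightarrow> bit poly) \<Rightarrow> 'a list \<Rightarrow> bit poly" where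
  "cyclic_hash L h1 a =
     cyc_red L (\<Sum>i<length a. h1 (a ! i) * monom 1 (length a - 1 - i))"

definition cons_positions :: "nat \<Rightarrow> int \<Rightarrow> nat \<Rightarrow> nat set" where
  "cons_positions L k m = (\<lambda>j. nat ((k + int j) mod int L)) ` {0..<m}"

definition delete_bits :: "nat \<Rightarrow> nat set \<Rightarrow> bit poly \<Rightarrow> bit list" where
  "delete_bits L S p = map (coeff p) (sorted_list_of_set ({0..<L} - S))"

text \<open>Uniform probability over all functions h1 : Sigma \<Rightarrow> GF(2)[x]/(x^L+1)
  (Sigma a finite type), i.e. mutually independent uniform values.\<close>
definition prob_h1 :: "nat \<Rightarrow> (('a::finite \<Rightarrow> bit poly) \<Rightarrow> bool) \<Rightarrow> real" where
  "prob_h1 L E =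
     real (card {h1. (\<forall>c. h1 c \<in> cyc_ring L) \<and> E h1})
     / real (card {h1 :: 'a \<Rightarrow> bit poly. \<forall>c. h1 c \<in> cyc_ring L})"

end

theory Submission
  imports Defs "HOL-Library.FuncSet"
begin

definition chi :: "bit \<Rightarrow> real" where "chi b = (if b = 0 then 1 else -1)"

lemma UNIV_bit: "(UNIV::bit set) = {0,1}"
  using bit.exhaust by auto

lemma chi_add: "chi (x + y) = chi x * chi y"
  by (cases x; cases y) (simp_all add: chi_def)

lemma chi_sum: "finite D \<Longrightarrow> chi (\<Sum>d\<in>D. f d) = (\<Prod>d\<in>D. chi (f d))"
proof (induction D rule: finite_induct)
  case empty then show ?case by (simp add: chi_def)
next
  case (insert x F) then show ?case by (simp only: sum.insert[OF insert(1,2)] prod.insert[OF insert(1,2)] chi_add insert(3))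
qed

lemma finite_UNIV_bit [simp]: "finite (UNIV::bit set)"
  by (simp add: UNIV_bit)

lemma chi_plus1: "chi (x + 1 + c) = - chi (x + c)"
  by (cases x; cases c) (simp_all add: chi_def)

lemma chi_sum_bit: "(\<Sum>y\<in>(UNIV::bit set). chi (y * w)) = (if w = 0 then 2 else 0)"
  by (cases w) (simp_all add: UNIV_bit chi_def)

lemma char_sum:
  assumes "finite D"
  shows "(\<Sum>\<sigma>\<in>PiE D (\<lambda>_. UNIV). chi (\<Sum>d\<in>D. \<sigma> d * w d)) = (if \<forall>d\<in>D. w d = 0 then 2 ^ card D else 0)"
proof -
  have "(\<Sum>\<sigma>\<in>PiE D (\<lambda>_. UNIV). chi (\<Sum>d\<in>D. \<sigma> d * w d)) = (\<Sum>\<sigma>\<in>PiE D (\<lambda>_. UNIV). \<Prod>d\<in>D. chi (\<sigma> d * w d))"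
    using assms by (intro sum.cong refl chi_sum)
  also have "\<dots> = (\<Prod>d\<in>D. \<Sum>y\<in>(UNIV::bit set). chi (y * w d))"
    by (rule prod_sum_PiE[symmetric]) (use assms UNIV_bit in auto)
  also have "\<dots> = (\<Prod>d\<in>D. (if w d = 0 then 2 else 0))" by (simp only: chi_sum_bit)
  also have "\<dots> = (if \<forall>d\<in>D. w d = 0 then 2 ^ card D else 0)"
  proof (cases "\<forall>d\<in>D. w d = 0")
    case True then show ?thesis by simp
  next
    case False
    then obtain d where "d \<in> D" "w d \<noteq> 0" by blast
    then show ?thesis using assms False by (intro trans[OF prod_zero]) auto
  qed
  finally show ?thesis .
qed

lemma sum_zero_invol:
  fixes X :: "'h set" and Phi :: "'h \<Rightarrow> bit"
  assumes "finite X" "e \<in> X"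
    and closed: "\<And>h. h \<in> X \<Longrightarrow> pl h e \<in> X"
    and invol: "\<And>h. h \<in> X \<Longrightarrow> pl (pl h e) e = h"
    and lin: "\<And>h. h \<in> X \<Longrightarrow> Phi (pl h e) = Phi h + 1"
  shows "(\<Sum>h\<in>X. chi (Phi h + c)) = 0"
proof -
  have bij: "bij_betw (\<lambda>h. pl h e) X X"
    by (rule bij_betwI[where g="\<lambda>h. pl h e"]) (auto simp: closed invol)
  have "(\<Sum>h\<in>X. chi (Phi h + c)) = (\<Sum>h\<in>X. chi (Phi (pl h e) + c))"
    using sum.reindex_bij_betw[OF bij, of "\<lambda>h. chi (Phi h + c)"] by simp
  also have "\<dots> = (\<Sum>h\<in>X. - chi (Phi h + c))"
    by (rule sum.cong) (simp_all only: lin chi_plus1)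
  finally show ?thesis by (simp add: sum_negf)
qed

lemma fourier_count:
  fixes X :: "'h set" and D :: "'d set" and G :: "'h \<Rightarrow> 'd \<Rightarrow> bit"
  assumes finX: "finite X" and finD: "finite D"
    and closed: "\<And>h e. h \<in> X \<Longrightarrow> e \<in> X \<Longrightarrow> pl h e \<in> X"
    and invol: "\<And>h e. h \<in> X \<Longrightarrow> e \<in> X \<Longrightarrow> pl (pl h e) e = h"
    and lin: "\<And>h e d. h \<in> X \<Longrightarrow> e \<in> X \<Longrightarrow> d \<in> D \<Longrightarrow> G (pl h e) d = G h d + G e d"
    and nondeg: "\<And>\<sigma>. (\<exists>d\<in>D. \<sigma> d \<noteq> 0) \<Longrightarrow> \<exists>e\<in>X. (\<Sum>d\<in>D. \<sigma> d * G e d) = 1"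
  shows "real (card {h\<in>X. \<forall>d\<in>D. G h d = t d}) * 2 ^ card D = real (card X)"
proof -
  define P where "P = PiE D (\<lambda>_. UNIV::bit set)"
  have finP: "finite P" unfolding P_def using finD UNIV_bit by (intro finite_PiE) auto
  define z where "z = (\<lambda>d. if d \<in> D then (0::bit) else undefined)"
  have zP: "z \<in> P" unfolding P_def z_def by auto
  have eq0: "(x::bit) + y = 0 \<longleftrightarrow> x = y" for x y by (cases x; cases y) auto
  have "real (card {h\<in>X. \<forall>d\<in>D. G h d = t d}) * 2 ^ card D
        = (\<Sum>h\<in>X. (if \<forall>d\<in>D. G h d = t d then 2 ^ card D else 0))"
    using finX by (simp add: sum.If_cases Int_def)
  also have "\<dots> = (\<Sum>h\<in>X. \<Sum>\<sigma>\<in>P. chi (\<Sum>d\<in>D. \<sigma> d * (G h d + t d)))"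
    unfolding P_def by (rule sum.cong[OF refl]) (simp only: char_sum[OF finD] eq0)
  also have "\<dots> = (\<Sum>\<sigma>\<in>P. \<Sum>h\<in>X. chi (\<Sum>d\<in>D. \<sigma> d * (G h d + t d)))"
    by (rule sum.swap)
  also have "\<dots> = (\<Sum>h\<in>X. chi (\<Sum>d\<in>D. z d * (G h d + t d))) + (\<Sum>\<sigma>\<in>P - {z}. \<Sum>h\<in>X. chi (\<Sum>d\<in>D. \<sigma> d * (G h d + t d)))"
    using finP zP by (simp add: sum.remove)
  also have "(\<Sum>h\<in>X. chi (\<Sum>d\<in>D. z d * (G h d + t d))) = real (card X)"
    by (simp add: z_def chi_def)
  also have "(\<Sum>\<sigma>\<in>P - {z}. \<Sum>h\<in>X. chi (\<Sum>d\<in>D. \<sigma> d * (G h d + t d))) = 0"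
  proof (rule sum.neutral, rule ballI)
    fix \<sigma> assume s: "\<sigma> \<in> P - {z}"
    have "\<exists>d\<in>D. \<sigma> d \<noteq> 0"
    proof (rule ccontr)
      assume "\<not> ?thesis"
      then have "\<sigma> = z" using s unfolding P_def z_def by (auto simp: PiE_def extensional_def)
      then show False using s by simp
    qed
    then obtain e where e: "e \<in> X" "(\<Sum>d\<in>D. \<sigma> d * G e d) = 1" using nondeg by blast
    have "(\<Sum>h\<in>X. chi (\<Sum>d\<in>D. \<sigma> d * (G h d + t d)))
        = (\<Sum>h\<in>X. chi ((\<Sum>d\<in>D. \<sigma> d * G h d) + (\<Sum>d\<in>D. \<sigma> d * t d)))"
      by (simp only: distrib_left sum.distrib)
    also have "\<dots> = 0"
    proof (rule sum_zero_invol[OF finX e(1)])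
      fix h assume h: "h \<in> X"
      show "pl h e \<in> X" using closed h e by auto
      show "pl (pl h e) e = h" using invol h e by auto
      have "(\<Sum>d\<in>D. \<sigma> d * G (pl h e) d) = (\<Sum>d\<in>D. \<sigma> d * G h d + \<sigma> d * G e d)"
        by (rule sum.cong[OF refl]) (simp only: lin[OF h e(1)] distrib_left)
      then show "(\<Sum>d\<in>D. \<sigma> d * G (pl h e) d) = (\<Sum>d\<in>D. \<sigma> d * G h d) + 1"
        using e by (simp only: sum.distrib)
    qed
    finally show "(\<Sum>h\<in>X. chi (\<Sum>d\<in>D. \<sigma> d * (G h d + t d))) = 0" .
  qed
  finally show ?thesis by simp
qed

lemma bitpoly_minus: "(a::bit poly) - b = a + b"
  by (rule poly_eqI) simp

lemma mod2: "(x::nat) < 2 * L \<Longrightarrow> x mod L = (if x < L then x else x - L)"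
  by (simp add: le_mod_geq)

lemma rot_iff:
  assumes "(k::nat) < L" "e < L" "j < L"
  shows "((k + e) mod L = j) \<longleftrightarrow> k = (j + L - e) mod L"
proof -
  obtain A where A: "(k + e) mod L = A" "A = (if k + e < L then k + e else k + e - L)"
    using assms mod2[of "k+e" L] by auto
  obtain B where B: "(j + L - e) mod L = B" "B = (if j + L - e < L then j + L - e else j + L - e - L)"
    using assms mod2[of "j + L - e" L] by auto
  have "A = j \<longleftrightarrow> k = B" using assms unfolding A(2) B(2) by (split if_split)+ linarith
  then show ?thesis using A(1) B(1) by simp
qed

lemma as_sum_lessThan:
  fixes p :: "'b::comm_monoid_add poly"
  assumes "degree p < L"
  shows "(\<Sum>k<L. monom (coeff p k) k) = p"
proof -
  have "{..<L} = {..L-1}" using assms by auto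
  then show ?thesis using poly_as_sum_of_monoms'[of p "L-1"] assms by simp
qed

lemma degree_M: "1 \<le> L \<Longrightarrow> degree (monom (1::bit) L + 1) = L"
  by (subst degree_add_eq_left) (simp_all add: degree_monom_eq)

lemma rot_mod:
  fixes p :: "bit poly"
  assumes "degree p < L" "e < L"
  shows "(p * monom 1 e) mod (monom 1 L + 1) = (\<Sum>k<L. monom (coeff p k) ((k+e) mod L))"
    (is "_ = ?R")
proof -
  define M :: "bit poly" where "M = monom 1 L + 1"
  have L1: "1 \<le> L" using assms by auto
  have dM: "degree M = L" unfolding M_def using degree_M[OF L1] .
  have prod: "p * monom 1 e = (\<Sum>k<L. monom (coeff p k) (k+e))"
  proof -
    have "p * monom 1 e = (\<Sum>k<L. monom (coeff p k) k) * monom 1 e"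
      using as_sum_lessThan[OF assms(1)] by simp
    also have "\<dots> = (\<Sum>k<L. monom (coeff p k) k * monom 1 e)" by (rule sum_distrib_right)
    also have "\<dots> = (\<Sum>k<L. monom (coeff p k) (k+e))" by (simp only: mult_monom mult_1_right)
    finally show ?thesis .
  qed
  have dv: "M dvd (monom (coeff p k) (k+e) - monom (coeff p k) ((k+e) mod L))" if "k < L" for k
  proof (cases "k + e < L")
    case True then show ?thesis by simp
  next
    case False
    define r where "r = k + e - L"
    have "k + e < 2 * L" using that assms by simp
    then have "(k+e) mod L = r" unfolding r_def using mod2[of "k+e" L] False by simp
    moreover have "k + e = r + L" unfolding r_def using False by simp
    ultimately have "monom (coeff p k) (k+e) - monom (coeff p k) ((k+e) mod L) = monom (coeff p k) r * M"
      unfolding M_def by (simp only: bitpoly_minus distrib_left mult_monom mult_1_right add.commute)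
    then show ?thesis by simp
  qed
  have e1: "p * monom 1 e = ?R + (\<Sum>k<L. monom (coeff p k) (k+e) - monom (coeff p k) ((k+e) mod L))"
    unfolding prod sum_subtractf by simp
  have "M dvd (\<Sum>k<L. monom (coeff p k) (k+e) - monom (coeff p k) ((k+e) mod L))"
    by (rule dvd_sum) (use dv in auto)
  then obtain q where "(\<Sum>k<L. monom (coeff p k) (k+e) - monom (coeff p k) ((k+e) mod L)) = M * q"
    by (rule dvdE)
  with e1 have q: "p * monom 1 e = ?R + M * q" by simp
  have dR: "degree ?R < L"
    by (rule degree_sum_less) (use L1 in \<open>auto intro: le_less_trans[OF degree_monom_le]\<close>)
  have "(p * monom 1 e) mod M = ?R mod M" unfolding q by simp
  also have "\<dots> = ?R" using dR dM by (simp add: mod_poly_less)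
  finally show ?thesis unfolding M_def .
qed

lemma coeff_rot:
  fixes p :: "bit poly"
  assumes "degree p < L" "e < L" "j < L"
  shows "coeff ((p * monom 1 e) mod (monom 1 L + 1)) j = coeff p ((j + L - e) mod L)"
proof -
  have "coeff ((p * monom 1 e) mod (monom 1 L + 1)) j = (\<Sum>k<L. if (k+e) mod L = j then coeff p k else 0)"
    unfolding rot_mod[OF assms(1,2)] coeff_sum coeff_monom by (rule sum.cong[OF refl]) (simp only: eq_commute)
  also have "\<dots> = (\<Sum>k<L. if k = (j + L - e) mod L then coeff p k else 0)"
    by (rule sum.cong[OF refl]) (use rot_iff[OF _ assms(2,3)] in simp)
  also have "\<dots> = coeff p ((j + L - e) mod L)"
    using assms by (simp add: sum.delta')
  finally show ?thesis .
qed

lemma degree_rot: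
  fixes p :: "bit poly"
  assumes "degree p < L" "e < L"
  shows "degree ((p * monom 1 e) mod (monom 1 L + 1)) < L"
proof -
  have L1: "1 \<le> L" using assms by auto
  show ?thesis unfolding rot_mod[OF assms]
    by (rule degree_sum_less) (use L1 in \<open>auto intro: le_less_trans[OF degree_monom_le]\<close>)
qed

lemma coeff_hash:
  fixes h1 :: "'a \<Rightarrow> bit poly"
  assumes deg: "\<And>c. degree (h1 c) < L" and len: "length s = n" and nL: "n \<le> L" and j: "j < L"
  shows "coeff (cyclic_hash L h1 s) j = (\<Sum>l<n. coeff (h1 (s!l)) ((j + L - (n-1-l)) mod L))"
proof -
  define M :: "bit poly" where "M = monom 1 L + 1"
  have L1: "1 \<le> L" using j by auto
  have dM: "degree M = L" unfolding M_def using degree_M[OF L1] .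
  have e: "n - 1 - l < L" for l using nL L1 by auto
  have "cyclic_hash L h1 s = (\<Sum>l<n. (h1 (s!l) * monom 1 (n - 1 - l)) mod M) mod M"
    unfolding cyclic_hash_def cyc_red_def M_def len by (simp add: mod_sum_eq)
  also have "\<dots> = (\<Sum>l<n. (h1 (s!l) * monom 1 (n - 1 - l)) mod M)"
    apply (rule mod_poly_less) unfolding dM
    by (rule degree_sum_less) (use degree_rot[OF deg e] L1 in \<open>auto simp: M_def\<close>)
  finally have "coeff (cyclic_hash L h1 s) j = (\<Sum>l<n. coeff ((h1 (s!l) * monom 1 (n - 1 - l)) mod M) j)"
    by (simp add: coeff_sum)
  also have "\<dots> = (\<Sum>l<n. coeff (h1 (s!l)) ((j + L - (n-1-l)) mod L))"
    unfolding M_def by (rule sum.cong[OF refl]) (rule coeff_rot[OF deg e j])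
  finally show ?thesis .
qed

lemma small_mult: "\<bar>Q * (L::int)\<bar> < L \<Longrightarrow> Q = 0"
proof (rule ccontr)
  assume a: "\<bar>Q * L\<bar> < L" "Q \<noteq> 0"
  then have L: "L > 0" by (smt (verit) abs_ge_zero)
  have "\<bar>Q * L\<bar> = \<bar>Q\<bar> * L" using L by (simp add: abs_mult)
  also have "\<dots> \<ge> 1 * L" using a(2) L by (intro mult_right_mono) auto
  finally show False using a(1) by simp
qed

lemma zero_iff_cong:
  fixes x y Q L :: int
  assumes "\<bar>x\<bar> < L" "\<bar>y\<bar> < L" "y = x + Q * L"
  shows "x = 0 \<longleftrightarrow> y = 0"
proof
  assume "x = 0" then have "\<bar>Q * L\<bar> < L" using assms by simp
  then have "Q = 0" by (rule small_mult)
  then show "y = 0" using assms \<open>x = 0\<close> by simp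
next
  assume "y = 0" then have "\<bar>Q * L\<bar> < L" using assms by (smt (verit))
  then have "Q = 0" by (rule small_mult)
  then show "x = 0" using assms \<open>y = 0\<close> by simp
qed

lemma arith_key:
  fixes J L w r m n l E :: nat
  assumes J: "J < L" and w: "w < L" and r: "r = (J + L - w) mod L" and rm: "r < m" and l: "l < n" and E: "E < L"
    and mn: "m + n - 1 = L" and n1: "1 \<le> n"
  shows "((J + L - (n-1-l)) mod L = (E + w + L - (n-1)) mod L) \<longleftrightarrow> r + l = E"
proof -
  define pos where "pos = (J + L - (n-1-l)) mod L"
  define p where "p = (E + w + L - (n-1)) mod L"
  define q1 where "q1 = (J + L - w) div L"
  define q2 where "q2 = (J + L - (n-1-l)) div L"
  define q3 where "q3 = (E + w + L - (n-1)) div L"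
  have L0: "0 < L" using J by simp
  have e1: "J + L - w = q1 * L + r" unfolding q1_def r by simp
  have e2: "J + L - (n-1-l) = q2 * L + pos" unfolding q2_def pos_def by simp
  have e3: "E + w + L - (n-1) = q3 * L + p" unfolding q3_def p_def by simp
  have i1: "int J + int L - int w = int q1 * int L + int r"
  proof -
    have "int (J + L - w) = int (q1 * L + r)" using e1 by simp
    then show ?thesis using w by (simp add: of_nat_diff)
  qed
  have i2: "int J + int L - (int n - 1 - int l) = int q2 * int L + int pos"
  proof -
    have "int (J + L - (n-1-l)) = int (q2 * L + pos)" using e2 by simp
    moreover have "int (n - 1 - l) = int n - 1 - int l" using l by (simp add: of_nat_diff)
    moreover have "n - 1 - l \<le> J + L" using l mn by linarith
    ultimately show ?thesis by (simp add: of_nat_diff)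
  qed
  have i3: "int E + int w + int L - (int n - 1) = int q3 * int L + int p"
  proof -
    have "int (E + w + L - (n-1)) = int (q3 * L + p)" using e3 by simp
    moreover have "int (n - 1) = int n - 1" using n1 by (simp add: of_nat_diff)
    moreover have "n - 1 \<le> E + w + L" using mn by linarith
    ultimately show ?thesis by (simp add: of_nat_diff)
  qed
  have eq: "int pos - int p = (int r + int l - int E) + (int q1 - 1 + int q3 - int q2) * int L"
    using i1 i2 i3 by (simp add: algebra_simps)
  have b1: "\<bar>int r + int l - int E\<bar> < int L" using rm l E mn by linarith
  have b2: "\<bar>int pos - int p\<bar> < int L"
    proof -
    have "pos < L" "p < L" using L0 unfolding pos_def p_def by simp_all
    then show ?thesis by linarith
  qed
  have "int r + int l - int E = 0 \<longleftrightarrow> int pos - int p = 0"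
    by (rule zero_iff_cong[OF b1 b2 eq])
  then show ?thesis unfolding pos_def[symmetric] p_def[symmetric] by linarith
qed

definition ee :: "'a \<Rightarrow> nat \<Rightarrow> ('a \<Rightarrow> bit poly)" where
  "ee c p = (\<lambda>x. if x = c then monom 1 p else 0)"

definition tau :: "nat \<Rightarrow> (nat \<Rightarrow> nat) \<Rightarrow> (nat \<Rightarrow> bit) \<Rightarrow> bit poly" where
  "tau m R f = (\<Sum>i<m. monom (f i) (R i))"

definition rr :: "'a list \<Rightarrow> 'a \<Rightarrow> bit poly" where
  "rr s c = (\<Sum>l<length s. monom (if s!l = c then 1 else 0) l)"

lemma coeff_ee: "coeff (ee c p x) q = (if x = c \<and> p = q then 1 else 0)"
  by (simp add: ee_def)

lemma degree_ee: "p < L \<Longrightarrow> degree (ee c p x) < L"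
  by (auto simp: ee_def intro: le_less_trans[OF degree_monom_le])

lemma key_single:
  fixes s :: "'a list" and f :: "nat \<Rightarrow> bit"
  assumes mn: "m + n - 1 = L" and n1: "1 \<le> n" and w: "w < L"
    and J: "\<And>i. i < m \<Longrightarrow> J i < L"
    and R: "\<And>i. i < m \<Longrightarrow> R i = (J i + L - w) mod L"
    and Rm: "\<And>i. i < m \<Longrightarrow> R i < m"
    and len: "length s = n" and E: "E < L" and nL: "n \<le> L"
  shows "(\<Sum>i<m. f i * coeff (cyclic_hash L (ee c ((E + w + L - (n-1)) mod L)) s) (J i))
         = coeff (tau m R f * rr s c) E"
proof -
  define p where "p = (E + w + L - (n-1)) mod L"
  have pL: "p < L" unfolding p_def using E by simp
  have "(\<Sum>i<m. f i * coeff (cyclic_hash L (ee c p) s) (J i))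
      = (\<Sum>i<m. f i * (\<Sum>l<n. coeff (ee c p (s!l)) ((J i + L - (n-1-l)) mod L)))"
  proof (rule sum.cong[OF refl])
    fix i assume "i \<in> {..<m}"
    then have "J i < L" using J by simp
    then show "f i * coeff (cyclic_hash L (ee c p) s) (J i) = f i * (\<Sum>l<n. coeff (ee c p (s!l)) ((J i + L - (n-1-l)) mod L))"
      by (simp only: coeff_hash[OF degree_ee[OF pL] len nL])
  qed
  also have "\<dots> = (\<Sum>i<m. \<Sum>l<n. f i * coeff (ee c p (s!l)) ((J i + L - (n-1-l)) mod L))"
    by (simp only: sum_distrib_left)
  also have "\<dots> = (\<Sum>i<m. \<Sum>l<n. if R i + l = E then f i * (if s!l = c then 1 else 0) else 0)"
  proof (rule sum.cong[OF refl], rule sum.cong[OF refl])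
    fix i l assume i: "i \<in> {..<m}" and l: "l \<in> {..<n}"
    have iff: "((J i + L - (n-1-l)) mod L = p) \<longleftrightarrow> R i + l = E"
      unfolding p_def
      by (rule arith_key[OF J[of i] w R[of i] Rm[of i] _ E mn n1]) (use i l in auto)
    show "f i * coeff (ee c p (s!l)) ((J i + L - (n-1-l)) mod L) = (if R i + l = E then f i * (if s!l = c then 1 else 0) else 0)"
      unfolding coeff_ee using iff by auto
  qed
  also have "\<dots> = coeff (tau m R f * rr s c) E"
    unfolding tau_def rr_def len sum_product mult_monom coeff_sum coeff_monom by simp
  finally show ?thesis unfolding p_def .
qed

lemma bit_double [simp]: "(x::bit) + x = 0"
  by (cases x) simp_all

lemma bitpoly_double: "(x::bit poly) + x = 0"
  by (rule poly_eqI) (simp only: coeff_add bit_double coeff_0)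

lemma bitpoly_add0: "(x::bit poly) + y = 0 \<Longrightarrow> x = y"
  by (metis add.assoc add.right_neutral bitpoly_double)

lemma coeff_tau_rr:
  "coeff (tau m R f * rr s c) E = (\<Sum>i<m. \<Sum>l<length s. if R i + l = E then f i * (if s!l = c then 1 else 0) else 0)"
  unfolding tau_def rr_def sum_product mult_monom coeff_sum coeff_monom by simp

lemma coeff_tau:
  assumes "inj_on R {..<m}" "i < m"
  shows "coeff (tau m R f) (R i) = f i"
proof -
  have "coeff (tau m R f) (R i) = (\<Sum>i'<m. if i' = i then f i' else 0)"
    unfolding tau_def coeff_sum coeff_monom
    by (rule sum.cong[OF refl]) (use assms in \<open>auto dest: inj_onD\<close>)
  also have "\<dots> = f i" using assms by (simp add: sum.delta')
  finally show ?thesis .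
qed

lemma coeff_rr: "l < length s \<Longrightarrow> coeff (rr s c) l = (if s!l = c then 1 else 0)"
proof -
  assume l: "l < length s"
  have "coeff (rr s c) l = (\<Sum>l'<length s. if l' = l then (if s!l' = c then 1 else 0) else 0)"
    unfolding rr_def coeff_sum coeff_monom by (rule sum.cong[OF refl]) auto
  also have "\<dots> = (if s!l = c then 1 else 0)" using l by (simp only: sum.delta[OF finite_lessThan]) simp
  finally show ?thesis .
qed

lemma rr_sum:
  fixes s :: "'a::finite list"
  shows "(\<Sum>c\<in>UNIV. rr s c) = (\<Sum>l<length s. monom 1 l)"
proof -
  have "rr s c = (\<Sum>l\<in>{l\<in>{..<length s}. s!l = c}. monom 1 l)" for c
  proof -
    have "rr s c = (\<Sum>l<length s. if s!l = c then monom 1 l else 0)"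
      unfolding rr_def by (rule sum.cong[OF refl]) auto
    also have "\<dots> = (\<Sum>l\<in>{l\<in>{..<length s}. s!l = c}. monom 1 l)"
      by (rule sum.inter_filter[symmetric]) simp
    finally show ?thesis .
  qed
  then have "(\<Sum>c\<in>UNIV. rr s c) = (\<Sum>c\<in>UNIV. \<Sum>l\<in>{l\<in>{..<length s}. s!l = c}. monom 1 l)"
    by simp
  also have "\<dots> = (\<Sum>l<length s. monom 1 l)"
    by (rule sum.group) auto
  finally show ?thesis .
qed

lemma indep:
  fixes a a' :: "'a::finite list" and f g :: "nat \<Rightarrow> bit"
  assumes mn: "m + n - 1 = L" and n1: "1 \<le> n"
    and la: "length a = n" and la': "length a' = n" and ne: "a \<noteq> a'"
    and Rm: "\<And>i. i < m \<Longrightarrow> R i < m" and Rinj: "inj_on R {..<m}"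
    and nz: "(\<exists>i<m. f i \<noteq> 0) \<or> (\<exists>i<m. g i \<noteq> 0)"
  shows "\<exists>c E. E < L \<and> coeff (tau m R f * rr a c + tau m R g * rr a' c) E = 1"
proof (rule ccontr)
  assume "\<not> ?thesis"
  then have z: "\<And>c E. E < L \<Longrightarrow> coeff (tau m R f * rr a c + tau m R g * rr a' c) E = 0" by auto
  have P0: "tau m R f * rr a c + tau m R g * rr a' c = 0" for c
  proof (rule poly_eqI)
    fix E
    show "coeff (tau m R f * rr a c + tau m R g * rr a' c) E = coeff 0 E"
    proof (cases "E < L")
      case True then show ?thesis using z by simp
    next
      case False
      have "\<And>i l. i < m \<Longrightarrow> l < n \<Longrightarrow> R i + l \<noteq> E" using Rm False mn by fastforce
      then show ?thesis unfolding coeff_add coeff_tau_rr la la' by simp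
    qed
  qed
  define Q :: "bit poly" where "Q = (\<Sum>l<n. monom 1 l)"
  have Q0: "Q \<noteq> 0"
  proof
    assume "Q = 0"
    then have "coeff Q 0 = 0" by simp
    moreover have "coeff Q 0 = 1" unfolding Q_def coeff_sum coeff_monom using n1
      by (simp add: sum.delta)
    ultimately show False by simp
  qed
  have "0 = (\<Sum>c\<in>UNIV. tau m R f * rr a c + tau m R g * rr a' c)" using P0 by simp
  also have "\<dots> = tau m R f * Q + tau m R g * Q"
    unfolding sum.distrib sum_distrib_left[symmetric] rr_sum la la' Q_def ..
  also have "\<dots> = (tau m R f + tau m R g) * Q" by (simp add: distrib_right)
  finally have "tau m R f + tau m R g = 0" using Q0 by simp
  then have fg: "tau m R f = tau m R g" by (rule bitpoly_add0)
  have f0: "tau m R f = 0"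
  proof (rule ccontr)
    assume nf: "tau m R f \<noteq> 0"
    have "rr a c = rr a' c" for c
    proof -
      have "tau m R f * (rr a c + rr a' c) = 0" using P0[of c] fg by (simp add: distrib_left)
      then show ?thesis using nf by (simp add: bitpoly_add0)
    qed
    then have "a = a'"
    proof -
      have "a ! l = a' ! l" if "l < n" for l
      proof -
        have "coeff (rr a (a!l)) l = coeff (rr a' (a!l)) l" using \<open>\<And>c. rr a c = rr a' c\<close> by simp
        then show ?thesis using that la la' coeff_rr[of l a] coeff_rr[of l a'] by (auto split: if_splits)
      qed
      then show ?thesis using la la' by (simp add: nth_equalityI)
    qed
    then show False using ne by simp
  qed
  have g0: "tau m R g = 0" using f0 fg by simp
  have "f i = 0" if "i < m" for i using coeff_tau[OF Rinj that, of f] f0 by simp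
  moreover have "g i = 0" if "i < m" for i using coeff_tau[OF Rinj that, of g] g0 by simp
  ultimately show False using nz by auto
qed

lemma mod2': "(x::nat) < 2 * L \<Longrightarrow> x mod L = (if x < L then x else x - L)"
  by (simp add: le_mod_geq)

lemma dvd_small: "int L dvd x \<Longrightarrow> \<bar>x\<bar> < int L \<Longrightarrow> x = 0"
proof -
  assume "int L dvd x" "\<bar>x\<bar> < int L"
  then obtain q where "x = q * int L" by (metis dvdE mult.commute)
  with \<open>\<bar>x\<bar> < int L\<close> show "x = 0" using small_mult by auto
qed

lemma inj_cons: "0 < L \<Longrightarrow> i < L \<Longrightarrow> i' < L \<Longrightarrow> nat ((k + int i) mod int L) = nat ((k + int i') mod int L) \<Longrightarrow> i = i'"
proof -
  assume L: "0 < L" "i < L" "i' < L" and e: "nat ((k + int i) mod int L) = nat ((k + int i') mod int L)"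
  have "(k + int i) mod int L = (k + int i') mod int L" using e L(1) by (simp add: eq_nat_nat_iff)
  then have "int L dvd (k + int i) - (k + int i')" by (simp add: mod_eq_dvd_iff)
  then have "int L dvd (int i - int i')" by simp
  moreover have "\<bar>int i - int i'\<bar> < int L" using L by linarith
  ultimately have "int i - int i' = 0" by (rule dvd_small)
  then show "i = i'" by simp
qed

lemma rel_inj: "(x::nat) < L \<Longrightarrow> y < L \<Longrightarrow> w < L \<Longrightarrow> (x + L - w) mod L = (y + L - w) mod L \<Longrightarrow> x = y"
proof -
  assume a: "x < L" "y < L" "w < L" "(x + L - w) mod L = (y + L - w) mod L"
  obtain A where A: "(x + L - w) mod L = A" "A = (if x + L - w < L then x + L - w else x + L - w - L)"
    using a mod2'[of "x + L - w" L] by auto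
  obtain B where B: "(y + L - w) mod L = B" "B = (if y + L - w < L then y + L - w else y + L - w - L)"
    using a mod2'[of "y + L - w" L] by auto
  have "A = B" using a(4) A(1) B(1) by argo
  show "x = y"
  proof (cases "x + L - w < L"; cases "y + L - w < L")
    assume c: "x + L - w < L" "y + L - w < L"
    then have "A = x + L - w" "B = y + L - w" using A(2) B(2) by argo+
    then show ?thesis using \<open>A = B\<close> a by linarith
  next
    assume c: "x + L - w < L" "\<not> y + L - w < L"
    then have "A = x + L - w" "B = y + L - w - L" using A(2) B(2) by argo+
    then show ?thesis using \<open>A = B\<close> a c by linarith
  next
    assume c: "\<not> x + L - w < L" "y + L - w < L"
    then have "A = x + L - w - L" "B = y + L - w" using A(2) B(2) by argo+
    then show ?thesis using \<open>A = B\<close> a c by linarith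
  next
    assume c: "\<not> x + L - w < L" "\<not> y + L - w < L"
    then have "A = x + L - w - L" "B = y + L - w - L" using A(2) B(2) by argo+
    then show ?thesis using \<open>A = B\<close> a c by linarith
  qed
qed

lemma window:
  fixes j L n m :: nat and k :: int
  assumes j: "j < L" and n1: "1 \<le> n" and nL: "n \<le> L" and m: "m = L - n + 1"
    and nS: "j \<notin> (\<lambda>i. nat ((k + int i) mod int L)) ` {0..<n-1}"
  shows "(j + L - nat ((k + int (n-1)) mod int L)) mod L < m"
proof (rule ccontr)
  define w where "w = nat ((k + int (n-1)) mod int L)"
  define t where "t = (j + L - w) mod L"
  assume "\<not> (j + L - nat ((k + int (n-1)) mod int L)) mod L < m"
  then have tm: "m \<le> t" unfolding t_def w_def by simp
  have L0: "0 < L" using j by simp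
  have tL: "t < L" unfolding t_def using L0 by simp
  have wL: "w < L" unfolding w_def using L0 by (simp add: nat_less_iff)
  have iw: "int w = (k + int (n-1)) mod int L" unfolding w_def using L0 by simp
  define q1 where "q1 = (k + int (n-1)) div int L"
  have e1: "k + int (n-1) = q1 * int L + int w" unfolding q1_def iw by simp
  define q2 where "q2 = (j + L - w) div L"
  have e2: "j + L - w = q2 * L + t" unfolding q2_def t_def by simp
  have i2: "int j + int L - int w = int q2 * int L + int t"
  proof -
    have "int (j + L - w) = int (q2 * L + t)" using e2 by simp
    then show ?thesis using wL by (simp add: of_nat_diff)
  qed
  have "int j = (k + int (t - m)) + (int q2 - q1) * int L"
    using e1 i2 tm m n1 nL by (simp add: algebra_simps of_nat_diff)
  then have "int j mod int L = (k + int (t - m)) mod int L" by simp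
  then have "int j = (k + int (t - m)) mod int L" using j by simp
  then have "j = nat ((k + int (t - m)) mod int L)" by simp
  moreover have "t - m \<in> {0..<n-1}" using tm tL m nL n1 by auto
  ultimately show False using nS by blast
qed

lemma finite_cyc_ring: "finite (cyc_ring L)"
proof -
  have inj: "inj_on (\<lambda>p. map (coeff p) [0..<L]) (cyc_ring L)"
  proof (rule inj_onI)
    fix p q assume p: "p \<in> cyc_ring L" and q: "q \<in> cyc_ring L"
      and e: "map (coeff p) [0..<L] = map (coeff q) [0..<L]"
    show "p = q"
    proof (rule poly_eqI)
      fix i show "coeff p i = coeff q i"
      proof (cases "i < L")
        case True then show ?thesis using e by (metis (no_types, lifting) add_0 diff_zero length_upt nth_map nth_upt)
      next
        case False then show ?thesis using p q by (simp add: cyc_ring_def coeff_eq_0)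
      qed
    qed
  qed
  have "(\<lambda>p. map (coeff p) [0..<L]) ` cyc_ring L \<subseteq> {xs. set xs \<subseteq> UNIV \<and> length xs = L}" by auto
  moreover have "finite {xs. set xs \<subseteq> (UNIV::bit set) \<and> length xs = L}"
    by (rule finite_lists_length_eq) simp
  ultimately show ?thesis using inj finite_imageD finite_subset by blast
qed

lemma finite_X: "finite {h1::'a::finite \<Rightarrow> bit poly. \<forall>c. h1 c \<in> cyc_ring L}"
proof -
  have "{h1::'a \<Rightarrow> bit poly. \<forall>c. h1 c \<in> cyc_ring L} = PiE UNIV (\<lambda>_. cyc_ring L)"
    by (simp add: PiE_UNIV_domain Pi_def)
  then show ?thesis using finite_cyc_ring by (simp add: finite_PiE)
qed

theorem mainTheorem8:
  fixes L n :: nat and k :: int and a a' :: "'a::finite list" and y y' :: "bit list"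
  assumes "1 \<le> n" and "n \<le> L"
    and "length a = n" and "length a' = n" and "a \<noteq> a'"
    and "length y = L - n + 1" and "length y' = L - n + 1"
  shows "prob_h1 L (\<lambda>h1::'a \<Rightarrow> bit poly.
            delete_bits L (cons_positions L k (n - 1)) (cyclic_hash L h1 a) = y \<and>
            delete_bits L (cons_positions L k (n - 1)) (cyclic_hash L h1 a') = y')
         = 1 / 2 ^ (2 * (L - n + 1))"
proof -
  note n1 = assms(1) and nL = assms(2) and la = assms(3) and la' = assms(4) and ne = assms(5)
    and ly = assms(6) and ly' = assms(7)
  define m where "m = L - n + 1"
  define S where "S = cons_positions L k (n - 1)"
  define K where "K = {0..<L} - S"
  define kl where "kl = sorted_list_of_set K"
  define w where "w = nat ((k + int (n-1)) mod int L)"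
  define R where "R = (\<lambda>i. (kl!i + L - w) mod L)"
  have L0: "0 < L" using n1 nL by simp
  have mn: "m + n - 1 = L" unfolding m_def using n1 nL by simp
  have wL: "w < L" unfolding w_def using L0 by (simp add: nat_less_iff)
  have S_def': "S = (\<lambda>j. nat ((k + int j) mod int L)) ` {0..<n-1}"
    unfolding S_def cons_positions_def ..
  have S_sub: "S \<subseteq> {0..<L}" unfolding S_def' using L0 by (auto simp: nat_less_iff)
  have cardS: "card S = n - 1"
    unfolding S_def'
  proof (rule card_image[THEN trans])
    show "inj_on (\<lambda>j. nat ((k + int j) mod int L)) {0..<n - 1}"
    proof (rule inj_onI)
      fix x y assume "x \<in> {0..<n-1}" "y \<in> {0..<n-1}" "nat ((k + int x) mod int L) = nat ((k + int y) mod int L)"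
      then show "x = y" using inj_cons[OF L0, of x y k] nL by auto
    qed
  qed simp
  have cardK: "card K = m" unfolding K_def m_def
    using S_sub cardS nL n1 by (simp add: card_Diff_subset finite_subset)
  have finK: "finite K" unfolding K_def by simp
  have kl_len: "length kl = m" and kl_dist: "distinct kl" and kl_set: "set kl = K"
    unfolding kl_def using finK cardK by simp_all
  have klK: "kl ! i \<in> K" if "i < m" for i using that kl_len kl_set nth_mem by blast
  have klL: "kl ! i < L" if "i < m" for i using klK[OF that] unfolding K_def by simp
  have Rm: "R i < m" if "i < m" for i
  proof -
    have "kl ! i \<notin> S" using klK[OF that] unfolding K_def by simp
    then show ?thesis unfolding R_def w_def
      by (intro window[OF klL[OF that] n1 nL m_def]) (simp add: S_def')
  qed
  have Rinj: "inj_on R {..<m}"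
  proof (rule inj_onI)
    fix i i' assume i: "i \<in> {..<m}" and i': "i' \<in> {..<m}" and e: "R i = R i'"
    have "kl ! i = kl ! i'" using rel_inj[OF klL klL wL] i i' e unfolding R_def by simp
    then show "i = i'" using kl_dist kl_len i i' by (simp add: nth_eq_iff_index_eq)
  qed
  define X where "X = {h1::'a \<Rightarrow> bit poly. \<forall>c. h1 c \<in> cyc_ring L}"
  define D where "D = (UNIV::bool set) \<times> {..<m}"
  define G where "G = (\<lambda>h (d::bool \<times> nat). coeff (cyclic_hash L h (if fst d then a else a')) (kl ! snd d))"
  define t where "t = (\<lambda>d::bool \<times> nat. (if fst d then y else y') ! snd d)"
  define pl where "pl = (\<lambda>(h::'a\<Rightarrow>bit poly) e c. h c + e c)"
  have finX: "finite X" unfolding X_def by (rule finite_X)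
  have finD: "finite D" unfolding D_def by simp
  have degX: "degree (h c) < L" if "h \<in> X" for h c using that unfolding X_def cyc_ring_def by simp
  have db: "(delete_bits L S p = ys) \<longleftrightarrow> (\<forall>i<m. coeff p (kl ! i) = ys ! i)" if "length ys = m" for p ys
    unfolding delete_bits_def kl_def[symmetric] K_def[symmetric] using that kl_len
    by (auto simp: list_eq_iff_nth_eq)
  have event: "{h1. (\<forall>c. h1 c \<in> cyc_ring L) \<and>
            (delete_bits L S (cyclic_hash L h1 a) = y \<and> delete_bits L S (cyclic_hash L h1 a') = y')}
        = {h \<in> X. \<forall>d\<in>D. G h d = t d}"
    unfolding X_def D_def G_def t_def using ly ly' by (auto simp: db m_def)
  have fc: "real (card {h \<in> X. \<forall>d\<in>D. G h d = t d}) * 2 ^ card D = real (card X)"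
  proof (rule fourier_count[OF finX finD, where pl=pl and G=G and t=t])
    fix h e assume h: "h \<in> X" and e: "e \<in> X"
    show "pl h e \<in> X" using degX[OF h] degX[OF e]
      unfolding X_def pl_def cyc_ring_def by (auto intro: le_less_trans[OF degree_add_le_max])
    show "pl (pl h e) e = h" unfolding pl_def by (simp add: add.assoc bitpoly_double)
    fix d assume d: "d \<in> D"
    then have kL: "kl ! snd d < L" using klL unfolding D_def by auto
    define s where "s = (if fst d then a else a')"
    have ls: "length s = n" unfolding s_def using la la' by simp
    have dpl: "degree (pl h e c) < L" for c
      unfolding pl_def using degX[OF h] degX[OF e] by (auto intro: le_less_trans[OF degree_add_le_max])
    show "G (pl h e) d = G h d + G e d"
      unfolding G_def s_def[symmetric]
      unfolding coeff_hash[OF dpl ls nL kL] coeff_hash[OF degX[OF h] ls nL kL] coeff_hash[OF degX[OF e] ls nL kL]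
      unfolding pl_def coeff_add by (rule sum.distrib)
  next
    fix \<sigma> :: "bool \<times> nat \<Rightarrow> bit" assume nz: "\<exists>d\<in>D. \<sigma> d \<noteq> 0"
    define f where "f = (\<lambda>i. \<sigma> (True, i))"
    define g where "g = (\<lambda>i. \<sigma> (False, i))"
    have nz': "(\<exists>i<m. f i \<noteq> 0) \<or> (\<exists>i<m. g i \<noteq> 0)"
      proof -
      obtain d where d: "d \<in> D" "\<sigma> d \<noteq> 0" using nz by blast
      obtain b i where bi: "d = (b, i)" by (cases d)
      have i: "i < m" using d(1) bi unfolding D_def by simp
      show ?thesis
      proof (cases b)
        case True then have "f i \<noteq> 0" using d(2) bi unfolding f_def by simp
        then show ?thesis using i by blast
      next
        case False then have "g i \<noteq> 0" using d(2) bi unfolding g_def by simp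
        then show ?thesis using i by blast
      qed
    qed
    obtain c E where E: "E < L" and cE: "coeff (tau m R f * rr a c + tau m R g * rr a' c) E = 1"
      using indep[OF mn n1 la la' ne Rm Rinj nz'] by blast
    define p where "p = (E + w + L - (n-1)) mod L"
    have pL: "p < L" unfolding p_def using L0 by simp
    have eX: "ee c p \<in> X" unfolding X_def cyc_ring_def using degree_ee[OF pL] by auto
    have Rdef: "R i = (kl ! i + L - w) mod L" if "i < m" for i unfolding R_def ..
    have "(\<Sum>d\<in>D. \<sigma> d * G (ee c p) d) = (\<Sum>b\<in>UNIV. \<Sum>i<m. \<sigma> (b, i) * G (ee c p) (b, i))"
      unfolding D_def sum.cartesian_product by (rule sum.cong[OF refl], simp only: case_prod_unfold prod.collapse)
    also have "\<dots> = (\<Sum>i<m. f i * coeff (cyclic_hash L (ee c p) a) (kl ! i))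
                  + (\<Sum>i<m. g i * coeff (cyclic_hash L (ee c p) a') (kl ! i))"
      proof -
        have sb: "(\<Sum>b\<in>(UNIV::bool set). F b) = F True + F False" for F :: "bool \<Rightarrow> bit"
          by (cases "F True"; cases "F False") (simp_all add: UNIV_bool)
        show ?thesis unfolding sb f_def g_def G_def by (simp only: fst_conv snd_conv if_True if_False)
      qed
    also have "\<dots> = coeff (tau m R f * rr a c) E + coeff (tau m R g * rr a' c) E"
      unfolding p_def
      by (simp only: key_single[OF mn n1 wL klL Rdef Rm la E nL] key_single[OF mn n1 wL klL Rdef Rm la' E nL])
    also have "\<dots> = 1" using cE by simp
    finally show "\<exists>e\<in>X. (\<Sum>d\<in>D. \<sigma> d * G e d) = 1" using eX by blast
  qed
  have cardD: "card D = 2 * m" unfolding D_def by (simp add: card_cartesian_product)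
  have X0: "(\<lambda>_. 0) \<in> X" unfolding X_def cyc_ring_def using L0 by simp
  have cX: "real (card X) > 0" using finX X0 card_gt_0_iff by fastforce
  have "prob_h1 L (\<lambda>h1::'a \<Rightarrow> bit poly.
            delete_bits L S (cyclic_hash L h1 a) = y \<and> delete_bits L S (cyclic_hash L h1 a') = y')
        = real (card {h \<in> X. \<forall>d\<in>D. G h d = t d}) / real (card X)"
    unfolding prob_h1_def event X_def ..
  also have "\<dots> = 1 / 2 ^ (2 * m)" using fc cX cardD by (simp add: field_simps)
  finally show ?thesis unfolding S_def m_def .
qed

end
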